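(* In an ordinal setting with indifference classes, let $f:\Sigma\to O$ be a social choice function. (i) If $f$ is pseudomonotone, then for every $\varepsilon>0$ there is a lex-truthful randomized mechanism that $\varepsilon$-implements $f$. (ii) Conversely, if for some $\varepsilon<\frac12$ there is a lex-truthful randomized mechanism that $\varepsilon$-implements $f$, then $f$ is pseudomonotone.
   Context: Setting: a set $N$ of $n$ agents and a finite set $O$ of outcomes. For each agent $j$ there is a fixed partition of $O$ into indifference classes $O^j_1,\dots,O^j_{m_j}$; each allowed preference $\succeq_j\in\Sigma_j$ is a strict total order on these classes, and $\Sigma=\prod_j\Sigma_j$. For $o\in O$, $\mathrm{pos}_{\succeq_j}(o)\in[m_j]$ is the rank under $\succeq_j$ of the class containing $o$; $o\succeq_j o'$ iff $\mathrm{pos}_{\succeq_j}(o)\le\mathrm{pos}_{\succeq_j}(o')$ and $o\succ_j o'$ iff $\mathrm{pos}_{\succeq_j}(o)<\mathrm{pos}_{\succeq_j}(o')$. A social choice function is a map $f:\Sigma\to O$. $f$ is pseudomonotone if for every agent $j$, every $\succeq_{-j}$, and all $\succeq_j,\succeq'_j\in\Sigma_j$, with $o=f(\succeq_j,\succeq_{-j})$, $o'=f(\succeq'_j,\succeq_{-j})$: either $o\succeq_j o'$, or there is $o''$ with $o''\succ_j o'$ and $\mathrm{pos}_{\succeq_j}(o'')<\mathrm{pos}_{\succeq'_j}(o'')$. A randomized mechanism maps profiles to distributions over $O$ and $\varepsilon$-implements $f$ if $\Pr[\mathcal{M}(\succeq)=f(\succeq)]\ge1-\varepsilon$ for every profile.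 For a lottery $p$ and $S\subseteq O$ let $p(S)=\sum_{o\in S}p(o)$. Given $\succeq_j$ and lotteries $p,q$, $p$ lex-dominates $q$ w.r.t. $\succeq_j$ if there is $r\in[m_j]$ such that, listing $j$'s classes in the order of $\succeq_j$, $p$ gives strictly more total probability than $q$ to the $r$-th class and the same total probability to each of the first $r-1$ classes. $\mathcal{M}$ is lex-truthful if for all $j$, all profiles $\succeq$ and all $\succeq'_j\in\Sigma_j$, either $\mathcal{M}(\succeq)$ and $\mathcal{M}(\succeq'_j,\succeq_{-j})$ assign the same total probability to each class $O^j_r$, or $\mathcal{M}(\succeq)$ lex-dominates $\mathcal{M}(\succeq'_j,\succeq_{-j})$ w.r.t. $\succeq_j$. *)

theory Defs
  imports "HOL-Probability.Probability" "HOL-Combinatorics.Permutations"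
begin

text \<open>
  For agent j, the indifference classes are indexed by {..<m j}: outcome o lies in
  class number cls j o.  A preference of agent j is a bijection sigma of {..<m j}
  (a permutation, identity outside) assigning to each class its rank; rank 0 is the
  best class.
\<close>

definition valid_setting :: "('a \<Rightarrow> nat) \<Rightarrow> ('a \<Rightarrow> 'o \<Rightarrow> nat) \<Rightarrow> ('a \<Rightarrow> (nat \<Rightarrow> nat) set) \<Rightarrow> bool" where
  "valid_setting m cls Sig \<longleftrightarrow>
     (\<forall>j. range (cls j) = {..<m j}) \<and> (\<forall>j. \<forall>\<sigma>\<in>Sig j. \<sigma> permutes {..<m j})"

definition profiles :: "('a \<Rightarrow> (nat \<Rightarrow> nat) set) \<Rightarrow> ('a \<Rightarrow> nat \<Rightarrow> nat) set" where
  "profiles Sig = {P. \<forall>j. P j \<in> Sig j}"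

definition pos :: "('a \<Rightarrow> 'o \<Rightarrow> nat) \<Rightarrow> 'a \<Rightarrow> (nat \<Rightarrow> nat) \<Rightarrow> 'o \<Rightarrow> nat" where
  "pos cls j \<sigma> x = \<sigma> (cls j x)"

definition pseudomonotone ::
  "('a \<Rightarrow> 'o \<Rightarrow> nat) \<Rightarrow> ('a \<Rightarrow> (nat \<Rightarrow> nat) set) \<Rightarrow> (('a \<Rightarrow> nat \<Rightarrow> nat) \<Rightarrow> 'o) \<Rightarrow> bool" where
  "pseudomonotone cls Sig f \<longleftrightarrow>
     (\<forall>j. \<forall>P\<in>profiles Sig. \<forall>\<sigma>'\<in>Sig j.
        let o1 = f P; o2 = f (P(j := \<sigma>')) in
        pos cls j (P j) o1 \<le> pos cls j (P j) o2 \<or>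
        (\<exists>o3. pos cls j (P j) o3 < pos cls j (P j) o2 \<and> pos cls j (P j) o3 < pos cls j \<sigma>' o3))"

abbreviation lprob :: "'o pmf \<Rightarrow> 'o set \<Rightarrow> real" where
  "lprob p S \<equiv> measure_pmf.prob p S"

definition lex_dominates ::
  "('a \<Rightarrow> nat) \<Rightarrow> ('a \<Rightarrow> 'o \<Rightarrow> nat) \<Rightarrow> 'a \<Rightarrow> (nat \<Rightarrow> nat) \<Rightarrow> 'o pmf \<Rightarrow> 'o pmf \<Rightarrow> bool" where
  "lex_dominates m cls j \<sigma> p q \<longleftrightarrow>
     (\<exists>r<m j. lprob p {x. pos cls j \<sigma> x = r} > lprob q {x. pos cls j \<sigma> x = r} \<and>
        (\<forall>r'<r. lprob p {x. pos cls j \<sigma> x = r'} = lprob q {x. pos cls j \<sigma> x = r'}))"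

definition lex_truthful ::
  "('a \<Rightarrow> nat) \<Rightarrow> ('a \<Rightarrow> 'o \<Rightarrow> nat) \<Rightarrow> ('a \<Rightarrow> (nat \<Rightarrow> nat) set) \<Rightarrow> (('a \<Rightarrow> nat \<Rightarrow> nat) \<Rightarrow> 'o pmf) \<Rightarrow> bool" where
  "lex_truthful m cls Sig M \<longleftrightarrow>
     (\<forall>j. \<forall>P\<in>profiles Sig. \<forall>\<sigma>'\<in>Sig j.
        (\<forall>r<m j. lprob (M P) {x. cls j x = r} = lprob (M (P(j := \<sigma>'))) {x. cls j x = r}) \<or>
        lex_dominates m cls j (P j) (M P) (M (P(j := \<sigma>'))))"

definition eps_implements ::
  "('a \<Rightarrow> (nat \<Rightarrow> nat) set) \<Rightarrow> real \<Rightarrow> (('a \<Rightarrow> nat \<Rightarrow> nat) \<Rightarrow> 'o pmf) \<Rightarrow> (('a \<Rightarrow> nat \<Rightarrow> nat) \<Rightarrow> 'o) \<Rightarrow> bool" where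
  "eps_implements Sig \<epsilon> M f \<longleftrightarrow> (\<forall>P\<in>profiles Sig. lprob (M P) {f P} \<ge> 1 - \<epsilon>)"

end

theory Submission
  imports Defs
begin


lemma perm_surj:
  assumes "\<sigma> permutes {..<m::nat}" "r < m"
  obtains c where "c < m" "\<sigma> c = r"
  using assms permutes_image[OF assms(1)] by (metis imageE lessThan_iff)

lemma perm_lt: "\<sigma> permutes {..<m::nat} \<Longrightarrow> c < m \<Longrightarrow> \<sigma> c < m"
  using permutes_in_image[of \<sigma> "{..<m}" c] by simp

lemma perm_inj: "\<sigma> permutes {..<m::nat} \<Longrightarrow> c < m \<Longrightarrow> d < m \<Longrightarrow> \<sigma> c = \<sigma> d \<Longrightarrow> c = d"
  using permutes_inj_on[of \<sigma> "{..<m}"] by (meson inj_on_def lessThan_iff)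

lemma rank_set:
  fixes C :: "'o \<Rightarrow> nat"
  assumes "range C = {..<m}" "\<sigma> permutes {..<m}" "c < m"
  shows "{x. \<sigma> (C x) = \<sigma> c} = {x. C x = c}"
proof -
  have "\<And>x. C x < m" using assms(1) by auto
  thus ?thesis using perm_inj[OF assms(2)] assms(3) by auto
qed

lemma top_eq:
  assumes ps: "\<sigma> permutes {..<m::nat}" and ps': "\<sigma>' permutes {..<m}"
    and le: "\<And>c. c < m \<Longrightarrow> \<sigma> c < K \<Longrightarrow> \<sigma>' c \<le> \<sigma> c"
  shows "\<And>c. c < m \<Longrightarrow> \<sigma> c < K \<Longrightarrow> \<sigma>' c = \<sigma> c"
proof -
  have "\<forall>c<m. \<sigma> c < n \<longrightarrow> \<sigma>' c = \<sigma> c" if "n \<le> K" for n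
    using that
  proof (induction n)
    case 0 then show ?case by simp
  next
    case (Suc n)
    show ?case
    proof (intro allI impI)
      fix c assume c: "c < m" "\<sigma> c < Suc n"
      show "\<sigma>' c = \<sigma> c"
      proof (cases "\<sigma> c < n")
        case True then show ?thesis using Suc c by auto
      next
        case False
        then have e: "\<sigma> c = n" using c by auto
        have l: "\<sigma>' c \<le> n" using le[OF c(1)] e Suc by auto
        show ?thesis
        proof (rule ccontr)
          assume "\<sigma>' c \<noteq> \<sigma> c"
          then have "\<sigma>' c < n" using l e by auto
          obtain d where d: "d < m" "\<sigma> d = \<sigma>' c" using perm_surj[OF ps perm_lt[OF ps' c(1)]] by blast
          have "\<sigma>' d = \<sigma> d" using Suc d \<open>\<sigma>' c < n\<close> by auto
          then have "d = c" using perm_inj[OF ps' d(1) c(1)] d by simp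
          then show False using d \<open>\<sigma>' c < n\<close> e by simp
        qed
      qed
    qed
  qed
  thus "\<And>c. c < m \<Longrightarrow> \<sigma> c < K \<Longrightarrow> \<sigma>' c = \<sigma> c" by blast
qed

lemma prob_class_ge:
  "lprob p {x. C x = C y} \<ge> lprob p {y}"
  by (intro measure_pmf.finite_measure_mono) auto

lemma prob_two_classes:
  assumes "c1 \<noteq> c2"
  shows "lprob p {x. C x = c1} + lprob p {x. C x = c2} \<le> 1"
proof -
  have "lprob p ({x. C x = c1} \<union> {x. C x = c2}) = lprob p {x. C x = c1} + lprob p {x. C x = c2}"
    using assms by (intro measure_pmf.finite_measure_Union) auto
  moreover have "lprob p ({x. C x = c1} \<union> {x. C x = c2}) \<le> 1" by simp
  ultimately show ?thesis by simp
qed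



lemma p2core:
  fixes C :: "'o \<Rightarrow> nat" and p q :: "'o pmf"
  assumes rC: "range C = {..<m}" and ps: "\<sigma> permutes {..<m}" and ps': "\<sigma>' permutes {..<m}"
    and k: "\<sigma> (C o2) < \<sigma> (C o1)"
    and no3: "\<And>o3. \<not> (\<sigma> (C o3) < \<sigma> (C o2) \<and> \<sigma> (C o3) < \<sigma>' (C o3))"
    and hp: "lprob p {o1} > 1/2" and hq: "lprob q {o2} > 1/2"
    and t1: "(\<forall>r<m. lprob p {x. C x = r} = lprob q {x. C x = r}) \<or>
       (\<exists>r<m. lprob p {x. \<sigma> (C x) = r} > lprob q {x. \<sigma> (C x) = r} \<and>
          (\<forall>r'<r. lprob p {x. \<sigma> (C x) = r'} = lprob q {x. \<sigma> (C x) = r'}))"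
    and t2: "(\<forall>r<m. lprob q {x. C x = r} = lprob p {x. C x = r}) \<or>
       (\<exists>r<m. lprob q {x. \<sigma>' (C x) = r} > lprob p {x. \<sigma>' (C x) = r} \<and>
          (\<forall>r'<r. lprob q {x. \<sigma>' (C x) = r'} = lprob p {x. \<sigma>' (C x) = r'}))"
  shows False
proof -
  define K where "K = \<sigma> (C o2)"
  have Cm: "\<And>x. C x < m" using rC by auto
  have le: "\<sigma>' c \<le> \<sigma> c" if "c < m" "\<sigma> c < K" for c
  proof -
    have "c \<in> range C" using rC that(1) by simp
    then obtain x where "C x = c" by blast
    then show ?thesis using no3[of x] that K_def by auto
  qed
  have top: "\<And>c. c < m \<Longrightarrow> \<sigma> c < K \<Longrightarrow> \<sigma>' c = \<sigma> c" by (rule top_eq[OF ps ps' le])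
  have top': "\<sigma> c = \<sigma>' c" if cc: "c < m" "\<sigma>' c < K" for c
  proof -
    obtain e where e: "e < m" "\<sigma> e = \<sigma>' c" using perm_surj[OF ps perm_lt[OF ps' cc(1)]] by blast
    have "\<sigma> e < K" using e(2) cc(2) by simp
    then have "\<sigma>' e = \<sigma> e" using top[OF e(1)] by blast
    then have "e = c" using perm_inj[OF ps' e(1) cc(1)] e by simp
    then show ?thesis using e by simp
  qed
  define a where "a c = lprob p {x. C x = c}" for c
  define b where "b c = lprob q {x. C x = c}" for c
  define c1 where "c1 = C o1"
  define c2 where "c2 = C o2"
  have c12: "c1 \<noteq> c2" using k c1_def c2_def by auto
  have c1m: "c1 < m" and c2m: "c2 < m" using Cm c1_def c2_def by auto
  have a1: "a c1 > 1/2" unfolding a_def c1_def using prob_class_ge[where p=p and C=C and y=o1] hp by linarith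
  have b2: "b c2 > 1/2" unfolding b_def c2_def using prob_class_ge[where p=q and C=C and y=o2] hq by linarith
  have a2: "a c2 < 1/2" using prob_two_classes[OF c12, where p=p and C=C] a1 unfolding a_def by linarith
  have ab2: "a c2 \<noteq> b c2" using a2 b2 by simp
  have rs: "\<And>\<tau> c. \<tau> permutes {..<m} \<Longrightarrow> c < m \<Longrightarrow> {x. \<tau> (C x) = \<tau> c} = {x. C x = c}"
    using rank_set[OF rC] by blast
  have n1: "\<not> (\<forall>r<m. lprob p {x. C x = r} = lprob q {x. C x = r})"
    using ab2 c2m a_def b_def by auto
  have n2: "\<not> (\<forall>r<m. lprob q {x. C x = r} = lprob p {x. C x = r})"
    using ab2 c2m a_def b_def by auto
  from t1 n1 obtain r where r: "r < m" "lprob p {x. \<sigma> (C x) = r} > lprob q {x. \<sigma> (C x) = r}"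
      "\<forall>r'<r. lprob p {x. \<sigma> (C x) = r'} = lprob q {x. \<sigma> (C x) = r'}"
    by blast
  obtain c where c: "c < m" "\<sigma> c = r" using perm_surj[OF ps r(1)] by blast
  have acb: "a c > b c" using r(2) rs[OF ps c(1)] c a_def b_def by simp
  have rK: "r < K"
  proof -
    have "r \<noteq> K"
    proof
      assume "r = K"
      then have "c = c2" using c K_def perm_inj[OF ps c(1) c2m] c2_def by simp
      then show False using acb a2 b2 by simp
    qed
    moreover have "\<not> K < r"
    proof
      assume "K < r"
      then have "lprob p {x. \<sigma> (C x) = \<sigma> c2} = lprob q {x. \<sigma> (C x) = \<sigma> c2}" using r(3) K_def c2_def by simp
      then show False using rs[OF ps c2m] ab2 a_def b_def by simp
    qed
    ultimately show ?thesis by simp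
  qed
  from t2 n2 obtain r2 where r2: "r2 < m" "lprob q {x. \<sigma>' (C x) = r2} > lprob p {x. \<sigma>' (C x) = r2}"
      "\<forall>r'<r2. lprob q {x. \<sigma>' (C x) = r'} = lprob p {x. \<sigma>' (C x) = r'}"
    by blast
  obtain d where d: "d < m" "\<sigma>' d = r2" using perm_surj[OF ps' r2(1)] by blast
  have bda: "b d > a d" using r2(2) rs[OF ps' d(1)] d a_def b_def by simp
  have sc: "\<sigma>' c = r" using top[OF c(1)] c(2) rK by simp
  show False
  proof (cases r2 r rule: linorder_cases)
    case less
    then have "\<sigma>' d < K" using d(2) rK by simp
    then have "\<sigma> d = r2" using top'[OF d(1)] d(2) by simp
    then have "a d = b d" using r(3) less rs[OF ps d(1)] a_def b_def by auto
    then show False using bda by simp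
  next
    case equal
    then have "d = c" using perm_inj[OF ps' d(1) c(1)] d sc by simp
    then show False using acb bda by simp
  next
    case greater
    then have "a c = b c" using r2(3) rs[OF ps' c(1)] sc a_def b_def by auto
    then show False using acb by simp
  qed
qed



lemma p1core:
  fixes D w :: "nat \<Rightarrow> real"
  assumes ps: "\<sigma> permutes {..<m::nat}" and ps': "\<sigma>' permutes {..<m}"
    and diff: "\<exists>c<m. \<sigma>' c \<noteq> \<sigma> c"
    and cam: "ca < m" and cbm: "cb < m"
    and pm: "\<sigma> ca \<le> \<sigma> cb \<or> (\<exists>c3<m. \<sigma> c3 < \<sigma> cb \<and> \<sigma> c3 < \<sigma>' c3)"
    and Dform: "\<And>c. c < m \<Longrightarrow> D c = \<alpha> * ((if ca = c then 1 else 0) - (if cb = c then 1 else 0))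
                       + \<beta> * (w (\<sigma> c) - w (\<sigma>' c))"
    and bpos: "\<beta> > 0"
    and bound: "\<And>s t. \<beta> * \<bar>w s - w t\<bar> < \<alpha>"
    and wdec: "\<And>s t. s < t \<Longrightarrow> t < m \<Longrightarrow> w s > w t"
  shows "\<exists>c<m. D c > 0 \<and> (\<forall>e<m. \<sigma> e < \<sigma> c \<longrightarrow> D e = 0)"
proof -
  obtain c0 where c0: "c0 < m \<and> \<sigma>' c0 \<noteq> \<sigma> c0"
    and mn: "\<And>e. e < m \<and> \<sigma>' e \<noteq> \<sigma> e \<Longrightarrow> \<sigma> c0 \<le> \<sigma> e"
    using ex_has_least_nat[where P="\<lambda>c. c < m \<and> \<sigma>' c \<noteq> \<sigma> c" and m=\<sigma>] diff by blast
  have fixd: "\<sigma>' e = \<sigma> e" if "e < m" "\<sigma> e < \<sigma> c0" for e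
    using mn[of e] that by force
  have gt: "\<sigma>' c0 > \<sigma> c0"
  proof (rule ccontr)
    assume "\<not> ?thesis"
    then have lt: "\<sigma>' c0 < \<sigma> c0" using c0 by simp
    obtain e where e: "e < m" "\<sigma> e = \<sigma>' c0" using perm_surj[OF ps perm_lt[OF ps'], of c0] c0 by blast
    have "\<sigma>' e = \<sigma> e" using fixd[OF e(1)] e(2) lt by simp
    then have "e = c0" using perm_inj[OF ps' e(1)] c0 e(2) by simp
    then show False using e(2) c0 by simp
  qed
  have wpos: "w (\<sigma> c0) - w (\<sigma>' c0) > 0"
    using wdec[OF gt perm_lt[OF ps']] c0 by simp
  show ?thesis
  proof (cases "(\<sigma> c0 < \<sigma> ca \<and> \<sigma> c0 < \<sigma> cb) \<or> ca = cb")
    case True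
    have "D c0 = \<beta> * (w (\<sigma> c0) - w (\<sigma>' c0))"
      using Dform[of c0] c0 True by auto
    then have "D c0 > 0" using wpos bpos by simp
    moreover have "D e = 0" if "e < m" "\<sigma> e < \<sigma> c0" for e
    proof -
      have "\<sigma>' e = \<sigma> e" using fixd that by blast
      then show ?thesis using Dform[OF that(1)] True that(2) by auto
    qed
    ultimately show ?thesis using c0 by blast
  next
    case False
    have ca2: "ca \<noteq> cb" using False by blast
    have s12: "\<sigma> ca < \<sigma> cb \<and> \<sigma> ca \<le> \<sigma> c0"
    proof (cases "\<sigma> ca \<le> \<sigma> cb")
      case True
      then have "\<sigma> ca < \<sigma> cb" using perm_inj[OF ps cam cbm] ca2 by fastforce
      then show ?thesis using False by auto
    next
      case F2: False
      then obtain c3 where c3: "c3 < m" "\<sigma> c3 < \<sigma> cb" "\<sigma> c3 < \<sigma>' c3" using pm by blast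
      then have "\<sigma> c0 \<le> \<sigma> c3" using mn[of c3] by simp
      then show ?thesis using False c3 F2 by auto
    qed
    have "D ca = \<alpha> + \<beta> * (w (\<sigma> ca) - w (\<sigma>' ca))"
      using Dform[OF cam] ca2 by simp
    moreover have "\<beta> * (w (\<sigma> ca) - w (\<sigma>' ca)) > - \<alpha>"
      using bound[of "\<sigma> ca" "\<sigma>' ca"] bpos
      by (smt (verit, ccfv_SIG) abs_mult abs_of_pos mult_minus_right abs_le_iff)
    ultimately have "D ca > 0" by simp
    moreover have "D e = 0" if "e < m" "\<sigma> e < \<sigma> ca" for e
    proof -
      have "\<sigma>' e = \<sigma> e" using fixd that s12 by simp
      moreover have "e \<noteq> ca" "e \<noteq> cb" using that s12 by auto
      ultimately show ?thesis using Dform[OF that(1)] by simp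
    qed
    ultimately show ?thesis using cam by blast
  qed
qed



definition wt :: "nat \<Rightarrow> nat \<Rightarrow> real" where
  "wt n t = real (n - t) / (\<Sum>s<n. real (n - s))"

definition rep :: "('a \<Rightarrow> 'o \<Rightarrow> nat) \<Rightarrow> 'a \<Rightarrow> nat \<Rightarrow> 'o" where
  "rep cls i c = (SOME x. cls i x = c)"

definition hh :: "('a \<Rightarrow> nat) \<Rightarrow> ('a \<Rightarrow> 'o \<Rightarrow> nat) \<Rightarrow> 'a \<Rightarrow> (nat \<Rightarrow> nat) \<Rightarrow> 'o \<Rightarrow> real" where
  "hh m cls i \<tau> x = (if x = rep cls i (cls i x) then wt (m i) (\<tau> (cls i x)) else 0)"

definition gg :: "('a::finite \<Rightarrow> nat) \<Rightarrow> ('a \<Rightarrow> 'o \<Rightarrow> nat) \<Rightarrow> (('a \<Rightarrow> nat \<Rightarrow> nat) \<Rightarrow> 'o) \<Rightarrow> real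
     \<Rightarrow> ('a \<Rightarrow> nat \<Rightarrow> nat) \<Rightarrow> 'o \<Rightarrow> real" where
  "gg m cls f \<epsilon> P x = (1 - \<epsilon>) * (if x = f P then 1 else 0)
      + \<epsilon> / real (card (UNIV :: 'a set)) * (\<Sum>i\<in>UNIV. hh m cls i (P i) x)"

lemma wt_Z_pos: "n \<ge> 1 \<Longrightarrow> (\<Sum>s<n. real (n - s)) > 0"
proof -
  assume "n \<ge> 1"
  then have "real (n - 0) \<le> (\<Sum>s<n. real (n - s))"
    by (intro member_le_sum) auto
  then show ?thesis using \<open>n \<ge> 1\<close> by simp
qed

lemma wt_nonneg: "wt n t \<ge> 0"
  unfolding wt_def by (intro divide_nonneg_nonneg sum_nonneg) auto

lemma wt_le1: "n \<ge> 1 \<Longrightarrow> wt n t \<le> 1"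
proof -
  assume n: "n \<ge> 1"
  have "real (n - t) \<le> real (n - 0)" by simp
  also have "\<dots> \<le> (\<Sum>s<n. real (n - s))"
    using n by (intro member_le_sum) auto
  finally show ?thesis unfolding wt_def using wt_Z_pos[OF n] by simp
qed

lemma wt_sum: "n \<ge> 1 \<Longrightarrow> (\<Sum>t<n. wt n t) = 1"
  unfolding wt_def using wt_Z_pos[of n] by (simp add: sum_divide_distrib[symmetric])

lemma wt_dec: "n \<ge> 1 \<Longrightarrow> s < t \<Longrightarrow> t < n \<Longrightarrow> wt n s > wt n t"
  unfolding wt_def using wt_Z_pos[of n] by (intro divide_strict_right_mono) auto

lemma rep_cls:
  assumes "range (cls i) = {..<m i}" "c < m i"
  shows "cls i (rep cls i c) = c"
proof -
  have "c \<in> range (cls i)" using assms by simp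
  then have "\<exists>x. cls i x = c" by blast
  then show ?thesis unfolding rep_def by (rule someI_ex)
qed

lemma hh_nonneg: "hh m cls i \<tau> x \<ge> 0"
  unfolding hh_def using wt_nonneg by simp

lemma hh_class:
  fixes cls :: "'a \<Rightarrow> 'o::finite \<Rightarrow> nat"
  assumes rc: "range (cls i) = {..<m i}" and c: "c < m i"
  shows "(\<Sum>x\<in>{x. cls i x = c}. hh m cls i \<tau> x) = wt (m i) (\<tau> c)"
proof -
  have "(\<Sum>x\<in>{x. cls i x = c}. hh m cls i \<tau> x)
      = (\<Sum>x\<in>{x\<in>{x. cls i x = c}. x = rep cls i (cls i x)}. wt (m i) (\<tau> (cls i x)))"
    unfolding hh_def by (subst sum.inter_filter) auto
  also have "{x\<in>{x. cls i x = c}. x = rep cls i (cls i x)} = {rep cls i c}"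
    using rep_cls[where cls=cls and i=i and m=m, OF rc c] by auto
  finally show ?thesis using rep_cls[where cls=cls and i=i and m=m, OF rc c] by simp
qed

lemma hh_total:
  fixes cls :: "'a \<Rightarrow> 'o::finite \<Rightarrow> nat"
  assumes rc: "range (cls i) = {..<m i}" and ps: "\<tau> permutes {..<m i}"
  shows "(\<Sum>x\<in>UNIV. hh m cls i \<tau> x) = 1"
proof -
  have m1: "m i \<ge> 1"
  proof -
    have "cls i undefined \<in> {..<m i}" using rc by blast
    then show ?thesis by simp
  qed
  have "(\<Sum>x\<in>UNIV. hh m cls i \<tau> x)
      = (\<Sum>x\<in>{x\<in>UNIV. x = rep cls i (cls i x)}. wt (m i) (\<tau> (cls i x)))"
    unfolding hh_def by (subst sum.inter_filter) auto
  also have "{x\<in>UNIV. x = rep cls i (cls i x)} = rep cls i ` {..<m i}"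
  proof
    show "{x \<in> UNIV. x = rep cls i (cls i x)} \<subseteq> rep cls i ` {..<m i}"
    proof
      fix x assume "x \<in> {x \<in> UNIV. x = rep cls i (cls i x)}"
      moreover have "cls i x \<in> {..<m i}" using rc by blast
      ultimately show "x \<in> rep cls i ` {..<m i}" by auto
    qed
    show "rep cls i ` {..<m i} \<subseteq> {x \<in> UNIV. x = rep cls i (cls i x)}"
      using rep_cls[where cls=cls and i=i and m=m, OF rc] by auto
  qed
  also have "(\<Sum>x\<in>rep cls i ` {..<m i}. wt (m i) (\<tau> (cls i x))) = (\<Sum>c<m i. wt (m i) (\<tau> c))"
  proof (subst sum.reindex)
    show "inj_on (rep cls i) {..<m i}"
      by (intro inj_onI) (metis lessThan_iff rep_cls[where cls=cls and i=i and m=m, OF rc])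
    show "sum ((\<lambda>x. wt (m i) (\<tau> (cls i x))) \<circ> rep cls i) {..<m i} = (\<Sum>c<m i. wt (m i) (\<tau> c))"
      using rep_cls[where cls=cls and i=i and m=m, OF rc] by (intro sum.cong) auto
  qed
  also have "(\<Sum>c<m i. wt (m i) (\<tau> c)) = (\<Sum>t\<in>\<tau> ` {..<m i}. wt (m i) t)"
    using permutes_inj_on[OF ps] by (simp add: sum.reindex)
  also have "\<dots> = 1" using permutes_image[OF ps] wt_sum[OF m1] by simp
  finally show ?thesis .
qed



lemma gg_nonneg: "0 \<le> \<epsilon> \<Longrightarrow> \<epsilon> \<le> 1 \<Longrightarrow> gg m cls f \<epsilon> P x \<ge> 0"
  unfolding gg_def using hh_nonneg
  by (intro add_nonneg_nonneg mult_nonneg_nonneg sum_nonneg divide_nonneg_nonneg) auto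

lemma vs_range: "valid_setting m cls Sig \<Longrightarrow> range (cls j) = {..<m j}"
  unfolding valid_setting_def by blast

lemma vs_perm: "valid_setting m cls Sig \<Longrightarrow> \<sigma> \<in> Sig j \<Longrightarrow> \<sigma> permutes {..<m j}"
  unfolding valid_setting_def by blast

lemma vs_m1: "valid_setting m cls Sig \<Longrightarrow> m j \<ge> 1"
proof -
  assume v: "valid_setting m cls Sig"
  have "cls j undefined \<in> {..<m j}" using vs_range[OF v] by blast
  then show ?thesis by simp
qed

lemma gg_sum:
  fixes m :: "'a::finite \<Rightarrow> nat" and cls :: "'a \<Rightarrow> 'o::finite \<Rightarrow> nat"
  assumes v: "valid_setting m cls Sig" and P: "P \<in> profiles Sig"
  shows "(\<Sum>x\<in>UNIV. gg m cls f \<epsilon> P x) = 1"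
proof -
  have N: "real (card (UNIV :: 'a set)) > 0" by simp
  have "(\<Sum>x\<in>UNIV. gg m cls f \<epsilon> P x)
     = (1 - \<epsilon>) * (\<Sum>x\<in>UNIV. (if x = f P then 1 else 0))
       + \<epsilon> / real (card (UNIV :: 'a set)) * (\<Sum>i\<in>UNIV. \<Sum>x\<in>UNIV. hh m cls i (P i) x)"
  proof -
    have sw: "(\<Sum>x\<in>UNIV. \<Sum>i\<in>UNIV. hh m cls i (P i) x) = (\<Sum>i\<in>UNIV. \<Sum>x\<in>UNIV. hh m cls i (P i) x)"
      by (rule sum.swap)
    show ?thesis unfolding gg_def sum.distrib sum_distrib_left[symmetric] sw ..
  qed
  also have "(\<Sum>i\<in>UNIV. \<Sum>x\<in>UNIV. hh m cls i (P i) x) = (\<Sum>i\<in>(UNIV::'a set). 1)"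
  proof (rule sum.cong)
    fix i :: 'a
    have "P i \<in> Sig i" using P unfolding profiles_def by blast
    then show "(\<Sum>x\<in>UNIV. hh m cls i (P i) x) = 1"
      by (rule hh_total[where cls=cls and i=i and m=m, OF vs_range[OF v] vs_perm[OF v]])
  qed simp
  also have "(\<Sum>i\<in>(UNIV::'a set). 1) = real (card (UNIV :: 'a set))" by simp
  finally show ?thesis using N by (simp add: field_simps)
qed

lemma Mech_prob:
  fixes m :: "'a::finite \<Rightarrow> nat" and cls :: "'a \<Rightarrow> 'o::finite \<Rightarrow> nat"
  assumes v: "valid_setting m cls Sig" and P: "P \<in> profiles Sig" and e: "0 \<le> \<epsilon>" "\<epsilon> \<le> 1"
  shows "lprob (embed_pmf (gg m cls f \<epsilon> P)) S = (\<Sum>x\<in>S. gg m cls f \<epsilon> P x)"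
proof -
  have nn: "\<And>x. 0 \<le> gg m cls f \<epsilon> P x" by (rule gg_nonneg[OF e])
  have "(\<integral>\<^sup>+x. ennreal (gg m cls f \<epsilon> P x) \<partial>count_space UNIV) = (\<Sum>x\<in>UNIV. ennreal (gg m cls f \<epsilon> P x))"
    by (rule nn_integral_count_space_finite) simp
  also have "\<dots> = ennreal (\<Sum>x\<in>UNIV. gg m cls f \<epsilon> P x)"
    by (rule sum_ennreal) (rule nn)
  also have "\<dots> = 1" by (simp only: gg_sum[OF v P] ennreal_1)
  finally have pr: "(\<integral>\<^sup>+x. ennreal (gg m cls f \<epsilon> P x) \<partial>count_space UNIV) = 1" .
  have "lprob (embed_pmf (gg m cls f \<epsilon> P)) S = (\<Sum>x\<in>S. pmf (embed_pmf (gg m cls f \<epsilon> P)) x)"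
    by (rule measure_measure_pmf_finite) simp
  also have "\<dots> = (\<Sum>x\<in>S. gg m cls f \<epsilon> P x)"
    using pmf_embed_pmf[OF nn pr] by simp
  finally show ?thesis .
qed

lemma class_prob:
  fixes m :: "'a::finite \<Rightarrow> nat" and cls :: "'a \<Rightarrow> 'o::finite \<Rightarrow> nat"
  assumes v: "valid_setting m cls Sig" and P: "P \<in> profiles Sig" and e: "0 \<le> \<epsilon>" "\<epsilon> \<le> 1"
    and c: "c < m j"
  shows "lprob (embed_pmf (gg m cls f \<epsilon> P)) {x. cls j x = c}
    = (1 - \<epsilon>) * (if cls j (f P) = c then 1 else 0)
      + \<epsilon> / real (card (UNIV :: 'a set)) * (wt (m j) (P j c)
         + (\<Sum>i\<in>UNIV - {j}. \<Sum>x\<in>{x. cls j x = c}. hh m cls i (P i) x))"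
proof -
  let ?S = "{x. cls j x = c}"
  have "lprob (embed_pmf (gg m cls f \<epsilon> P)) ?S = (\<Sum>x\<in>?S. gg m cls f \<epsilon> P x)"
    by (rule Mech_prob[OF v P e])
  also have "\<dots> = (1 - \<epsilon>) * (\<Sum>x\<in>?S. (if x = f P then 1 else 0))
       + \<epsilon> / real (card (UNIV :: 'a set)) * (\<Sum>i\<in>UNIV. \<Sum>x\<in>?S. hh m cls i (P i) x)"
  proof -
    have sw: "(\<Sum>x\<in>?S. \<Sum>i\<in>UNIV. hh m cls i (P i) x) = (\<Sum>i\<in>UNIV. \<Sum>x\<in>?S. hh m cls i (P i) x)"
      by (rule sum.swap)
    show ?thesis unfolding gg_def sum.distrib sum_distrib_left[symmetric] sw ..
  qed
  also have "(\<Sum>x\<in>?S. (if x = f P then 1 else 0)) = (if cls j (f P) = c then 1 else (0::real))"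
    by (simp add: sum.delta')
  also have "(\<Sum>i\<in>UNIV. \<Sum>x\<in>?S. hh m cls i (P i) x)
      = (\<Sum>x\<in>?S. hh m cls j (P j) x) + (\<Sum>i\<in>UNIV - {j}. \<Sum>x\<in>?S. hh m cls i (P i) x)"
    by (subst sum.remove[of UNIV j]) auto
  also have "(\<Sum>x\<in>?S. hh m cls j (P j) x) = wt (m j) (P j c)"
    by (rule hh_class[where cls=cls and i=j and m=m, OF vs_range[OF v] c])
  finally show ?thesis .
qed



lemma part2:
  fixes m :: "'a::finite \<Rightarrow> nat" and cls :: "'a \<Rightarrow> 'o::finite \<Rightarrow> nat"
  assumes v: "valid_setting m cls Sig" and eps: "\<epsilon> < 1/2"
    and lt: "lex_truthful m cls Sig M" and imp: "eps_implements Sig \<epsilon> M f"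
  shows "pseudomonotone cls Sig f"
  unfolding pseudomonotone_def Let_def
proof (intro allI ballI)
  fix j P \<sigma>' assume P: "P \<in> profiles Sig" and s': "\<sigma>' \<in> Sig j"
  let ?P' = "P(j := \<sigma>')"
  have P': "?P' \<in> profiles Sig" using P s' unfolding profiles_def by auto
  have sj: "P j \<in> Sig j" using P unfolding profiles_def by auto
  have bk: "?P'(j := P j) = P" by simp
  show "pos cls j (P j) (f P) \<le> pos cls j (P j) (f ?P') \<or>
        (\<exists>o3. pos cls j (P j) o3 < pos cls j (P j) (f ?P') \<and> pos cls j (P j) o3 < pos cls j \<sigma>' o3)"
  proof (rule ccontr)
    assume neg: "\<not> ?thesis"
    have k: "P j (cls j (f ?P')) < P j (cls j (f P))" using neg unfolding pos_def by auto
    have no3: "\<And>o3. \<not> (P j (cls j o3) < P j (cls j (f ?P')) \<and> P j (cls j o3) < \<sigma>' (cls j o3))"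
      using neg unfolding pos_def by auto
    have hp: "lprob (M P) {f P} > 1/2" using imp P eps unfolding eps_implements_def by force
    have hq: "lprob (M ?P') {f ?P'} > 1/2" using imp P' eps unfolding eps_implements_def by force
    have t1: "(\<forall>r<m j. lprob (M P) {x. cls j x = r} = lprob (M ?P') {x. cls j x = r}) \<or>
       (\<exists>r<m j. lprob (M P) {x. P j (cls j x) = r} > lprob (M ?P') {x. P j (cls j x) = r} \<and>
          (\<forall>r'<r. lprob (M P) {x. P j (cls j x) = r'} = lprob (M ?P') {x. P j (cls j x) = r'}))"
      using lt P s' unfolding lex_truthful_def lex_dominates_def pos_def by blast
    have t2': "(\<forall>r<m j. lprob (M ?P') {x. cls j x = r} = lprob (M (?P'(j := P j))) {x. cls j x = r}) \<or>
       (\<exists>r<m j. lprob (M ?P') {x. ?P' j (cls j x) = r} > lprob (M (?P'(j := P j))) {x. ?P' j (cls j x) = r} \<and>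
          (\<forall>r'<r. lprob (M ?P') {x. ?P' j (cls j x) = r'} = lprob (M (?P'(j := P j))) {x. ?P' j (cls j x) = r'}))"
      using lt P' sj unfolding lex_truthful_def lex_dominates_def pos_def by blast
    have t2: "(\<forall>r<m j. lprob (M ?P') {x. cls j x = r} = lprob (M P) {x. cls j x = r}) \<or>
       (\<exists>r<m j. lprob (M ?P') {x. \<sigma>' (cls j x) = r} > lprob (M P) {x. \<sigma>' (cls j x) = r} \<and>
          (\<forall>r'<r. lprob (M ?P') {x. \<sigma>' (cls j x) = r'} = lprob (M P) {x. \<sigma>' (cls j x) = r'}))"
      using t2' unfolding bk by simp
    show False
      by (rule p2core[where C="cls j" and m="m j" and \<sigma>="P j" and \<sigma>'=\<sigma>' and p="M P" and q="M ?P'",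
            OF vs_range[OF v] vs_perm[OF v sj] vs_perm[OF v s'] k no3 hp hq t1 t2])
  qed
qed



lemma perm_eq_on:
  assumes "\<sigma> permutes {..<n::nat}" "\<sigma>' permutes {..<n}" "\<forall>c<n. \<sigma>' c = \<sigma> c"
  shows "\<sigma>' = \<sigma>"
proof
  fix x show "\<sigma>' x = \<sigma> x"
  proof (cases "x < n")
    case True then show ?thesis using assms(3) by blast
  next
    case False then show ?thesis using permutes_not_in[OF assms(1)] permutes_not_in[OF assms(2)] by simp
  qed
qed

lemma alg: "((a::real)*x + b*(w1 + S)) - (a*y + b*(w2 + S)) = a*(x-y) + b*(w1-w2)"
  by (simp add: algebra_simps)

lemma part1:
  fixes m :: "'a::finite \<Rightarrow> nat" and cls :: "'a \<Rightarrow> 'o::finite \<Rightarrow> nat"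
  assumes v: "valid_setting m cls Sig" and pm: "pseudomonotone cls Sig f" and e: "\<epsilon> > 0"
  shows "\<exists>M. lex_truthful m cls Sig M \<and> eps_implements Sig \<epsilon> M f"
proof -
  define e' where "e' = min \<epsilon> (1/3)"
  have e'0: "0 < e'" "e' \<le> 1/3" "e' \<le> \<epsilon>" using e unfolding e'_def by auto
  have e'1: "0 \<le> e'" "e' \<le> 1" using e'0 by auto
  define N where "N = real (card (UNIV :: 'a set))"
  have N1: "N \<ge> 1" unfolding N_def
    by (simp add: Suc_leI card_gt_0_iff)
  define M where "M = (\<lambda>P. embed_pmf (gg m cls f e' P))"
  have impl: "eps_implements Sig \<epsilon> M f"
    unfolding eps_implements_def
  proof
    fix P assume P: "P \<in> profiles Sig"
    have "lprob (M P) {f P} = gg m cls f e' P (f P)"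
      unfolding M_def using Mech_prob[OF v P e'1, of f "{f P}"] by simp
    also have "gg m cls f e' P (f P) \<ge> 1 - e'"
    proof -
      have "0 \<le> e' / real (card (UNIV :: 'a set)) * (\<Sum>i\<in>UNIV. hh m cls i (P i) (f P))"
        using e'1 hh_nonneg by (intro mult_nonneg_nonneg sum_nonneg divide_nonneg_nonneg) auto
      then show ?thesis unfolding gg_def by simp
    qed
    finally show "lprob (M P) {f P} \<ge> 1 - \<epsilon>" using e'0 by simp
  qed
  have lt: "lex_truthful m cls Sig M"
    unfolding lex_truthful_def
  proof (intro allI ballI)
    fix j P \<sigma>' assume P: "P \<in> profiles Sig" and s': "\<sigma>' \<in> Sig j"
    let ?P' = "P(j := \<sigma>')"
    have P': "?P' \<in> profiles Sig" using P s' unfolding profiles_def by auto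
    have sj: "P j \<in> Sig j" using P unfolding profiles_def by auto
    have ps: "P j permutes {..<m j}" by (rule vs_perm[OF v sj])
    have ps': "\<sigma>' permutes {..<m j}" by (rule vs_perm[OF v s'])
    have rc: "range (cls j) = {..<m j}" by (rule vs_range[OF v])
    show "(\<forall>r<m j. lprob (M P) {x. cls j x = r} = lprob (M ?P') {x. cls j x = r}) \<or>
        lex_dominates m cls j (P j) (M P) (M ?P')"
    proof (cases "\<sigma>' = P j")
      case True
      then have "?P' = P" by simp
      then show ?thesis by simp
    next
      case False
      have diff: "\<exists>c<m j. \<sigma>' c \<noteq> P j c"
        using perm_eq_on[OF ps ps'] False by blast
      have clsm: "\<And>x. cls j x < m j" using rc by auto
      have pmj: "P j (cls j (f P)) \<le> P j (cls j (f ?P')) \<or>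
          (\<exists>c3<m j. P j c3 < P j (cls j (f ?P')) \<and> P j c3 < \<sigma>' c3)"
      proof -
        have "pos cls j (P j) (f P) \<le> pos cls j (P j) (f ?P') \<or>
          (\<exists>o3. pos cls j (P j) o3 < pos cls j (P j) (f ?P') \<and> pos cls j (P j) o3 < pos cls j \<sigma>' o3)"
          using pm P s' unfolding pseudomonotone_def Let_def by blast
        then show ?thesis unfolding pos_def using clsm by blast
      qed
      define D where "D c = lprob (M P) {x. cls j x = c} - lprob (M ?P') {x. cls j x = c}" for c
      have Dform: "D c = (1 - e') * ((if cls j (f P) = c then 1 else 0) - (if cls j (f ?P') = c then 1 else 0))
                       + (e' / N) * (wt (m j) (P j c) - wt (m j) (\<sigma>' c))" if c: "c < m j" for c
      proof -
        have same: "(\<Sum>i\<in>UNIV - {j}. \<Sum>x\<in>{x. cls j x = c}. hh m cls i (?P' i) x)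
             = (\<Sum>i\<in>UNIV - {j}. \<Sum>x\<in>{x. cls j x = c}. hh m cls i (P i) x)"
          by (intro sum.cong) auto
        show ?thesis
          unfolding D_def M_def class_prob[OF v P e'1 c] class_prob[OF v P' e'1 c] same N_def
          by (simp only: fun_upd_same alg)
      qed
      have bound: "(e' / N) * \<bar>wt (m j) s - wt (m j) t\<bar> < 1 - e'" for s t
      proof -
        have m1: "m j \<ge> 1" by (rule vs_m1[OF v])
        have a: "\<bar>wt (m j) s - wt (m j) t\<bar> \<le> 1"
          using wt_nonneg[of "m j" s] wt_nonneg[of "m j" t] wt_le1[OF m1, of s] wt_le1[OF m1, of t] by linarith
        have "e' / N \<le> e' / 1" by (rule divide_left_mono) (use N1 e'0 in auto)
        then have "e' / N \<le> e'" by (simp only: div_by_1)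
        then have b: "e' / N \<le> 1/3" using e'0 by linarith
        have "(e' / N) * \<bar>wt (m j) s - wt (m j) t\<bar> \<le> 1/3 * 1"
          using a b e'0 N1 by (intro mult_mono) auto
        then show ?thesis using e'0 by linarith
      qed
      have bpos: "e' / N > 0" using e'0 N1 by simp
      obtain c where c: "c < m j" "D c > 0" "\<forall>e<m j. P j e < P j c \<longrightarrow> D e = 0"
        using p1core[where D=D and w="wt (m j)" and \<sigma>="P j" and \<sigma>'=\<sigma>' and m="m j"
            and ca="cls j (f P)" and cb="cls j (f ?P')" and \<alpha>="1 - e'" and \<beta>="e' / N",
            OF ps ps' diff clsm clsm pmj Dform bpos bound wt_dec[OF vs_m1[OF v]]] by blast
      have rs: "\<And>d. d < m j \<Longrightarrow> {x. P j (cls j x) = P j d} = {x. cls j x = d}"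
        using rank_set[OF rc ps] by blast
      have "lex_dominates m cls j (P j) (M P) (M ?P')"
        unfolding lex_dominates_def pos_def
      proof (intro exI conjI allI impI)
        show "P j c < m j" by (rule perm_lt[OF ps c(1)])
        show "lprob (M ?P') {x. P j (cls j x) = P j c} < lprob (M P) {x. P j (cls j x) = P j c}"
          using c(2) unfolding rs[OF c(1)] D_def by simp
        fix r' assume r': "r' < P j c"
        obtain d where d: "d < m j" "P j d = r'"
          using perm_surj[OF ps, of r'] r' perm_lt[OF ps c(1)] by auto
        have "D d = 0" using c(3) d r' by blast
        then show "lprob (M P) {x. P j (cls j x) = r'} = lprob (M ?P') {x. P j (cls j x) = r'}"
          using rs[OF d(1)] d(2) unfolding D_def by simp
      qed
      then show ?thesis by blast
    qed
  qed
  show ?thesis using lt impl by blast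
qed


theorem theorem5:
  fixes m :: "'a::finite \<Rightarrow> nat"
    and cls :: "'a \<Rightarrow> 'o::finite \<Rightarrow> nat"
    and Sig :: "'a \<Rightarrow> (nat \<Rightarrow> nat) set"
    and f :: "('a \<Rightarrow> nat \<Rightarrow> nat) \<Rightarrow> 'o"
  assumes "valid_setting m cls Sig"
  shows "(pseudomonotone cls Sig f \<longrightarrow>
            (\<forall>\<epsilon>>0. \<exists>M. lex_truthful m cls Sig M \<and> eps_implements Sig \<epsilon> M f))
       \<and> ((\<exists>\<epsilon><1/2. \<exists>M. lex_truthful m cls Sig M \<and> eps_implements Sig \<epsilon> M f)
            \<longrightarrow> pseudomonotone cls Sig f)"
  using part1[OF assms] part2[OF assms] by blast

end
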